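(* Let $\varepsilon\in[0,1]$ and $\delta\in[0,1/3]$. Any $(\varepsilon,\delta)$-DP (event-level) continual mechanism in the exact setting for incremental $\textsc{TopK}$ on a universe of $n$ elements and streams of length $T$ — i.e. one that outputs at each time $t$ estimates $a^t_1,\dots,a^t_n$ such that with probability at least $2/3$, for all $t\in[T]$ and all $k\in[n]$, $|a^t_k-\|f^t\|_{\mathrm{top}\text{-}k}|\le\alpha$ — must have additive error $\alpha=\Omega(\min\{T^{1/4},\sqrt n\})$.
   Context: Incremental streams over universe $[n]\cup\{\bot\}$: each update $u^t$ inserts one element of $[n]$ or is the empty element $\bot$ (no change); the frequency vector $f^t\in\mathbb N^n$ counts insertions of each element among $u^1,\dots,u^t$. For $f\in\mathbb R^n$ and $k\in[n]$, $\|f\|_{\mathrm{top}\text{-}k}=\sum_{i=1}^k|f_{\sigma(i)}|$ where $\sigma$ sorts so that $|f_{\sigma(1)}|\ge\dots\ge|f_{\sigma(n)}|$. A continual mechanism outputs after each update a value depending only on updates so far. Two streams are event-level neighboring if they differ in at most one time step; $(\varepsilon,\delta)$-DP means $\Pr[\mathcal A(u)\in S]\le e^\varepsilon\Pr[\mathcal A(v)\in S]+\delta$ for all neighbors $u,v$ and output sets $S$. *)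

theory Defs
  imports "HOL-Probability.Probability"
begin

text \<open>Streams: lists of updates; None is the empty update, Some i inserts element i.
  The universe [n] is represented as {0..<n}.\<close>

definition valid_stream :: "nat \<Rightarrow> nat \<Rightarrow> nat option list \<Rightarrow> bool" where
  "valid_stream n T u \<longleftrightarrow> length u = T \<and>
     (\<forall>x\<in>set u. case x of None \<Rightarrow> True | Some i \<Rightarrow> i < n)"

definition freq :: "nat option list \<Rightarrow> nat \<Rightarrow> nat \<Rightarrow> real" where
  "freq u t i = real (length (filter (\<lambda>x. x = Some i) (take t u)))"

definition topk :: "nat \<Rightarrow> (nat \<Rightarrow> real) \<Rightarrow> nat \<Rightarrow> real" where
  "topk n f k = sum_list (take k (rev (sort (map (\<lambda>i. \<bar>f i\<bar>) [0..<n]))))"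

definition neighbors :: "nat option list \<Rightarrow> nat option list \<Rightarrow> bool" where
  "neighbors u v \<longleftrightarrow> length u = length v \<and> card {j. j < length u \<and> u ! j \<noteq> v ! j} \<le> 1"

definition out_space :: "nat \<Rightarrow> nat \<Rightarrow> (nat \<Rightarrow> nat \<Rightarrow> real) measure" where
  "out_space T n = PiM {1..T} (\<lambda>_. PiM {1..n} (\<lambda>_. borel))"

definition mechanism :: "nat \<Rightarrow> nat \<Rightarrow> (nat option list \<Rightarrow> (nat \<Rightarrow> nat \<Rightarrow> real) measure) \<Rightarrow> bool" where
  "mechanism n T M \<longleftrightarrow> (\<forall>u. valid_stream n T u \<longrightarrow>
      prob_space (M u) \<and> sets (M u) = sets (out_space T n))"

definition continual :: "nat \<Rightarrow> nat \<Rightarrow> (nat option list \<Rightarrow> (nat \<Rightarrow> nat \<Rightarrow> real) measure) \<Rightarrow> bool" where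
  "continual n T M \<longleftrightarrow> (\<forall>u v t. valid_stream n T u \<longrightarrow> valid_stream n T v \<longrightarrow> t \<le> T \<longrightarrow>
      take t u = take t v \<longrightarrow>
      distr (M u) (out_space t n) (\<lambda>a. restrict a {1..t}) =
      distr (M v) (out_space t n) (\<lambda>a. restrict a {1..t}))"

definition event_dp :: "real \<Rightarrow> real \<Rightarrow> nat \<Rightarrow> nat \<Rightarrow> (nat option list \<Rightarrow> (nat \<Rightarrow> nat \<Rightarrow> real) measure) \<Rightarrow> bool" where
  "event_dp \<epsilon> \<delta> n T M \<longleftrightarrow> (\<forall>u v S. valid_stream n T u \<longrightarrow> valid_stream n T v \<longrightarrow> neighbors u v \<longrightarrow>
      S \<in> sets (out_space T n) \<longrightarrow>
      measure (M u) S \<le> exp \<epsilon> * measure (M v) S + \<delta>)"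

definition topk_accurate :: "real \<Rightarrow> nat \<Rightarrow> nat \<Rightarrow> (nat option list \<Rightarrow> (nat \<Rightarrow> nat \<Rightarrow> real) measure) \<Rightarrow> bool" where
  "topk_accurate \<alpha> n T M \<longleftrightarrow> (\<forall>u. valid_stream n T u \<longrightarrow>
      measure (M u) {a \<in> space (M u). \<forall>t\<in>{1..T}. \<forall>k\<in>{1..n}.
          \<bar>a t k - topk n (freq u t) k\<bar> \<le> \<alpha>} \<ge> 2/3)"

end

theory Submission
  imports Defs
begin


fun hdm :: "nat \<Rightarrow> nat \<Rightarrow> nat \<Rightarrow> real" where
  "hdm 0 r j = 1"
| "hdm (Suc m) r j = (if odd r \<and> odd j then -1 else 1) * hdm m (r div 2) (j div 2)"

lemma hd_sq: "hdm m r j * hdm m r j = 1"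
  by (induction m arbitrary: r j) auto

lemma hd_pm: "hdm m r j = 1 \<or> hdm m r j = -1"
  by (induction m arbitrary: r j) auto

lemma hd_0: "hdm m 0 j = 1"
  by (induction m arbitrary: j) auto

lemma sum_split2: "(\<Sum>r<2*N. g r) = (\<Sum>q<N. g (2*q) + g (2*q+1::nat))"
proof (induction N)
  case 0 then show ?case by simp
next
  case (Suc N)
  have "{..<2*Suc N} = insert (2*N+1) (insert (2*N) {..<2*N})" by auto
  then show ?case using Suc by (simp add: algebra_simps)
qed

lemma hd_orth:
  assumes "i < 2^m" "j < 2^m"
  shows "(\<Sum>r<2^m. hdm m r i * hdm m r j) = (if i = j then 2^m else 0)"
  using assms
proof (induction m arbitrary: i j)
  case 0 then show ?case by simp
next
  case (Suc m)
  have ih: "(\<Sum>q<2^m. hdm m q (i div 2) * hdm m q (j div 2)) = (if i div 2 = j div 2 then 2^m else 0)"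
    using Suc by (intro Suc.IH) auto
  have "(\<Sum>r<2^Suc m. hdm (Suc m) r i * hdm (Suc m) r j)
      = (\<Sum>q<2^m. hdm (Suc m) (2*q) i * hdm (Suc m) (2*q) j + hdm (Suc m) (2*q+1) i * hdm (Suc m) (2*q+1) j)"
    using sum_split2[of "\<lambda>r. hdm (Suc m) r i * hdm (Suc m) r j" "2^m"] by simp
  also have "\<dots> = (\<Sum>q<2^m. (1 + (if odd i then -1 else 1) * (if odd j then -1 else 1)) * (hdm m q (i div 2) * hdm m q (j div 2)))"
    by (rule sum.cong) (auto simp: algebra_simps)
  also have "\<dots> = (1 + (if odd i then -1 else 1) * (if odd j then -1 else 1)) * (if i div 2 = j div 2 then 2^m else 0)"
    by (simp add: sum_distrib_left[symmetric] ih)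
  also have "\<dots> = (if i = j then 2^Suc m else 0)"
  proof -
    have "i = j \<longleftrightarrow> (i div 2 = j div 2 \<and> (odd i \<longleftrightarrow> odd j))"
      by (metis div_mult_mod_eq odd_iff_mod_2_eq_one not_mod_2_eq_0_eq_1)
    then show ?thesis by auto
  qed
  finally show ?case .
qed

lemma hd_energy:
  fixes z :: "nat \<Rightarrow> real"
  shows "(\<Sum>r<2^m. (\<Sum>j<2^m. hdm m r j * z j)^2) = 2^m * (\<Sum>j<2^m. (z j)^2)"
proof -
  have e1: "(\<Sum>j<2^m. hdm m r j * z j)^2 = (\<Sum>i<2^m. \<Sum>j<2^m. z i * z j * (hdm m r i * hdm m r j))" for r
    unfolding power2_eq_square sum_product by (intro sum.cong refl) (simp add: algebra_simps)
  have "(\<Sum>r<2^m. (\<Sum>j<2^m. hdm m r j * z j)^2)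
      = (\<Sum>r<2^m. \<Sum>i<2^m. \<Sum>j<2^m. z i * z j * (hdm m r i * hdm m r j))"
    using e1 by simp
  also have "\<dots> = (\<Sum>i<2^m. \<Sum>r<2^m. \<Sum>j<2^m. z i * z j * (hdm m r i * hdm m r j))"
    by (rule sum.swap)
  also have "\<dots> = (\<Sum>i<2^m. \<Sum>j<2^m. \<Sum>r<2^m. z i * z j * (hdm m r i * hdm m r j))"
    by (intro sum.cong refl sum.swap)
  also have "\<dots> = (\<Sum>i<2^m. \<Sum>j<2^m. z i * z j * (\<Sum>r<2^m. hdm m r i * hdm m r j))"
    by (simp add: sum_distrib_left)
  also have "\<dots> = (\<Sum>i<2^m. \<Sum>j<2^m. (if i = j then z i * z j * 2^m else 0))"
    by (intro sum.cong refl) (simp add: hd_orth)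
  also have "\<dots> = (\<Sum>i<2^m. z i * z i * 2^m)"
    by (simp add: sum.delta)
  finally show ?thesis by (simp add: power2_eq_square sum_distrib_left algebra_simps)
qed



lemma topk_eq:
  fixes f :: "nat \<Rightarrow> real"
  assumes Q: "Q \<subseteq> {0..<n}" and k: "card Q = k"
    and nn: "\<And>i. f i \<ge> 0"
    and dom: "\<And>i j. i \<in> Q \<Longrightarrow> j \<in> {0..<n} - Q \<Longrightarrow> f j \<le> f i"
  shows "topk n f k = (\<Sum>i\<in>Q. f i)"
proof -
  let ?xs = "[0..<n]"
  let ?q = "map f (filter (\<lambda>i. i \<in> Q) ?xs)"
  let ?p = "map f (filter (\<lambda>i. i \<notin> Q) ?xs)"
  have abs: "map (\<lambda>i. \<bar>f i\<bar>) ?xs = map f ?xs" using nn by simp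
  have ms: "mset (map f ?xs) = mset (?p @ ?q)"
  proof -
    have "mset ?xs = {#i \<in># mset ?xs. i \<notin> Q#} + {#i \<in># mset ?xs. \<not> i \<notin> Q#}"
      by (rule multiset_partition)
    then have "image_mset f (mset ?xs) = image_mset f {#i \<in># mset ?xs. i \<notin> Q#} + image_mset f {#i \<in># mset ?xs. i \<in> Q#}"
      by (metis image_mset_union not_not)
    then show ?thesis by simp
  qed
  have srt: "sorted (sort ?p @ sort ?q)"
    using dom by (auto simp: sorted_append)
  have "sort (map f ?xs) = sort ?p @ sort ?q"
    by (rule properties_for_sort) (use ms srt in auto)
  moreover have lq: "length ?q = k"
  proof -
    have "length (filter (\<lambda>i. i \<in> Q) ?xs) = card (set (filter (\<lambda>i. i \<in> Q) ?xs))"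
      by (metis distinct_card distinct_filter distinct_upt)
    also have "set (filter (\<lambda>i. i \<in> Q) ?xs) = Q" using Q by auto
    finally show ?thesis using k by simp
  qed
  ultimately have "topk n f k = sum_list (rev (sort ?q))"
    unfolding topk_def abs by simp
  also have "\<dots> = sum_list ?q" by (metis mset_rev mset_sort sum_mset_sum_list)
  also have "\<dots> = (\<Sum>i\<in>Q. f i)"
  proof -
    have "sum_list ?q = sum f (set (filter (\<lambda>i. i \<in> Q) ?xs))"
      by (simp add: sum_list_distinct_conv_sum_set)
    also have "set (filter (\<lambda>i. i \<in> Q) ?xs) = Q" using Q by auto
    finally show ?thesis .
  qed
  finally show ?thesis .
qed



definition qq :: "nat \<Rightarrow> nat \<Rightarrow> nat \<Rightarrow> bool" where
  "qq m r j \<longleftrightarrow> hdm m r j = 1"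

definition datas :: "nat \<Rightarrow> bool list \<Rightarrow> nat option list" where
  "datas m x = map (\<lambda>j. if x!j then Some j else None) [0..<2^m]"

definition stage :: "nat \<Rightarrow> nat \<Rightarrow> nat option list" where
  "stage m r = map Some (filter (\<lambda>j. 0<r \<and> \<not> qq m (r-1) j) [0..<2^m] @ filter (qq m r) [0..<2^m])"

definition pre :: "nat \<Rightarrow> bool list \<Rightarrow> nat \<Rightarrow> nat option list" where
  "pre m x r = datas m x @ concat (map (stage m) [0..<Suc r])"

definition tt :: "nat \<Rightarrow> nat \<Rightarrow> nat" where
  "tt m r = 2^m + sum_list (map (\<lambda>s. length (stage m s)) [0..<Suc r])"

definition strm :: "nat \<Rightarrow> nat \<Rightarrow> bool list \<Rightarrow> nat option list" where
  "strm m T x = pre m x (2^m-1) @ replicate (T - tt m (2^m-1)) None"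

lemma length_pre: "length (pre m x r) = tt m r"
  by (simp add: pre_def tt_def datas_def length_concat comp_def)

lemma len_filter_upt: "length (filter P [0..<d]) = card {j. j < d \<and> P j}"
  by (subst distinct_card[symmetric]) auto

lemma len_filter_upt_eq: "length (filter (\<lambda>j. P j \<and> j = i) [0..<d]) = (if i < d \<and> P i then 1 else 0)"
proof -
  have "{j. j < d \<and> P j \<and> j = i} = (if i < d \<and> P i then {i} else {})" by auto
  then show ?thesis by (simp add: len_filter_upt)
qed

lemma cnt_datas: "length (filter (\<lambda>y. y = Some i) (datas m x)) = (if i < 2^m \<and> x!i then 1 else 0)"
proof -
  have "length (filter (\<lambda>y. y = Some i) (datas m x)) = length (filter (\<lambda>j. x!j \<and> j = i) [0..<2^m])"
    unfolding datas_def by (simp add: filter_map comp_def) (metis (mono_tags, lifting) option.distinct(1) option.inject)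
  then show ?thesis by (simp add: len_filter_upt_eq)
qed

lemma cnt_some: "length (filter (\<lambda>y. y = Some i) (map Some xs)) = length (filter (\<lambda>j. j = i) xs)"
  by (induction xs) auto

lemma cnt_stage: "length (filter (\<lambda>y. y = Some i) (stage m r)) =
   (if i < 2^m then (if 0<r \<and> \<not> qq m (r-1) i then 1 else 0) + (if qq m r i then 1 else 0) else 0)"
  unfolding stage_def cnt_some by (simp only: filter_append length_append filter_filter len_filter_upt_eq) auto

lemma cnt_pre: "length (filter (\<lambda>y. y = Some i) (pre m x r)) =
   (if i < 2^m then (if x!i then 1 else 0) + r + (if qq m r i then 1 else 0) else 0)"
proof (induction r)
  case 0
  then show ?case by (simp add: pre_def cnt_datas cnt_stage)
next
  case (Suc r)
  have "pre m x (Suc r) = pre m x r @ stage m (Suc r)" by (simp add: pre_def)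
  then show ?case using Suc by (simp add: cnt_stage)
qed

lemma pre_mono: "r \<le> r' \<Longrightarrow> \<exists>w. pre m x r' = pre m x r @ w"
proof (induction r' rule: dec_induct)
  case base then show ?case by simp
next
  case (step r')
  then obtain w where "pre m x r' = pre m x r @ w" by blast
  then have "pre m x (Suc r') = pre m x r @ (w @ stage m (Suc r'))" by (simp add: pre_def)
  then show ?case by blast
qed

lemma take_strm: "r < 2^m \<Longrightarrow> take (tt m r) (strm m T x) = pre m x r"
proof -
  assume r: "r < 2^m"
  obtain w where w: "pre m x (2^m-1) = pre m x r @ w" using pre_mono[of r "2^m-1" m x] r by fastforce
  show ?thesis unfolding strm_def w using length_pre[of m x r] by simp
qed

lemma length_stage: "length (stage m r) \<le> 2 * 2^m"
proof -
  have "length (filter (\<lambda>j. 0<r \<and> \<not> qq m (r-1) j) [0..<2^m]) \<le> 2^m"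
    using length_filter_le[of _ "[0..<2^m]"] by simp
  moreover have "length (filter (qq m r) [0..<2^m]) \<le> 2^m"
    using length_filter_le[of _ "[0..<2^m]"] by simp
  ultimately show ?thesis by (simp add: stage_def)
qed

lemma tt_bound: "tt m r \<le> 2^m + Suc r * (2 * 2^m)"
proof -
  have "sum_list (map (\<lambda>s. length (stage m s)) [0..<Suc r]) \<le> sum_list (map (\<lambda>s. 2 * 2^m) [0..<Suc r])"
    by (rule sum_list_mono) (rule length_stage)
  then show ?thesis by (simp add: tt_def sum_list_triv)
qed

lemma tt_ge: "2^m \<le> tt m r" by (simp add: tt_def)

lemma length_strm: "tt m (2^m-1) \<le> T \<Longrightarrow> length (strm m T x) = T"
  by (simp add: strm_def length_pre)

lemma freq_strm: "r < 2^m \<Longrightarrow> freq (strm m T x) (tt m r) i =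
   (if i < 2^m then (if x!i then 1 else 0) + real r + (if qq m r i then 1 else 0) else 0)"
  unfolding freq_def take_strm cnt_pre by simp



definition kk :: "nat \<Rightarrow> nat \<Rightarrow> nat" where
  "kk m r = card {j. j < 2^m \<and> qq m r j}"

definition ans :: "nat \<Rightarrow> nat \<Rightarrow> bool list \<Rightarrow> real" where
  "ans m r y = (\<Sum>j<2^m. if qq m r j then (if y!j then 1 else 0) + real r + 1 else 0)"

definition ham :: "nat \<Rightarrow> bool list \<Rightarrow> bool list \<Rightarrow> nat" where
  "ham m x y = card {j. j < 2^m \<and> x!j \<noteq> y!j}"

lemma qq_0: "qq m 0 j" by (simp add: qq_def hd_0)

lemma hdm_0col: "hdm m r 0 = 1"
  by (induction m arbitrary: r) auto

lemma kk_pos: "1 \<le> kk m r"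
proof -
  have "0 \<in> {j. j < 2^m \<and> qq m r j}" by (simp add: qq_def hdm_0col)
  then show ?thesis unfolding kk_def by (metis One_nat_def Suc_leI card_gt_0_iff empty_iff finite_Collect_conjI finite_Collect_less_nat)
qed

lemma kk_le: "kk m r \<le> 2^m"
proof -
  have "kk m r \<le> card {j. j < (2::nat)^m}" unfolding kk_def by (rule card_mono) auto
  then show ?thesis by simp
qed

lemma topk_strm:
  assumes r: "r < 2^m" and n: "2^m \<le> n"
  shows "topk n (freq (strm m T x) (tt m r)) (kk m r) = ans m r x"
proof -
  let ?f = "freq (strm m T x) (tt m r)"
  let ?Q = "{j. j < 2^m \<and> qq m r j}"
  have "topk n ?f (kk m r) = (\<Sum>i\<in>?Q. ?f i)"
  proof (rule topk_eq)
    show "?Q \<subseteq> {0..<n}" using n by auto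
    show "card ?Q = kk m r" by (simp add: kk_def)
    show "0 \<le> ?f i" for i by (simp add: freq_def)
    show "?f j \<le> ?f i" if "i \<in> ?Q" "j \<in> {0..<n} - ?Q" for i j
      using that r by (simp add: freq_strm)
  qed
  also have "\<dots> = ans m r x"
  proof -
    have "?Q = {j \<in> {..<2^m}. qq m r j}" by auto
    then have "(\<Sum>i\<in>?Q. ?f i) = (\<Sum>j<2^m. if qq m r j then ?f j else 0)"
      using sum.inter_filter[of "{..<2^m}" ?f "qq m r"] by simp
    also have "\<dots> = ans m r x" unfolding ans_def
      by (intro sum.cong refl) (use r in \<open>simp add: freq_strm\<close>)
    finally show ?thesis .
  qed
  finally show ?thesis .
qed

definition bv :: "bool \<Rightarrow> real" where "bv b = (if b then 1 else 0)"

lemma ans_diff: "ans m r x - ans m r y = (\<Sum>j<2^m. if qq m r j then bv (x!j) - bv (y!j) else 0)"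
  unfolding ans_def bv_def sum_subtractf[symmetric] by (intro sum.cong refl) auto

lemma cons_ham:
  assumes cx: "\<forall>r<2^m. \<bar>a (tt m r) (kk m r) - ans m r x\<bar> \<le> \<alpha>"
      and cy: "\<forall>r<2^m. \<bar>a (tt m r) (kk m r) - ans m r y\<bar> \<le> \<alpha>"
  shows "real (ham m x y) \<le> 36 * \<alpha>^2"
proof -
  define z where "z j = bv (x!j) - bv (y!j)" for j
  have d2: "\<bar>ans m r x - ans m r y\<bar> \<le> 2*\<alpha>" if "r < 2^m" for r
    using cx cy that by (smt (verit))
  have tot: "(\<Sum>j<2^m. z j) = ans m 0 x - ans m 0 y"
    unfolding ans_diff z_def by (simp add: qq_0)
  have row: "(\<Sum>j<2^m. hdm m r j * z j) = 2 * (ans m r x - ans m r y) - (ans m 0 x - ans m 0 y)" for r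
  proof -
    have "(\<Sum>j<2^m. hdm m r j * z j) = (\<Sum>j<2^m. 2 * (if qq m r j then z j else 0) - z j)"
      by (intro sum.cong refl) (use hd_pm[of m r] in \<open>force simp: qq_def\<close>)
    also have "\<dots> = 2 * (\<Sum>j<2^m. if qq m r j then z j else 0) - (\<Sum>j<2^m. z j)"
      by (simp add: sum_subtractf sum_distrib_left)
    finally show ?thesis unfolding z_def ans_diff by (simp add: qq_0)
  qed
  have sq: "(\<Sum>j<2^m. hdm m r j * z j)^2 \<le> 36 * \<alpha>^2" if "r < 2^m" for r
  proof -
    have "\<bar>\<Sum>j<2^m. hdm m r j * z j\<bar> \<le> 6 * \<alpha>"
      unfolding row using d2[OF that] d2[of 0] by (smt (verit) zero_less_power zero_less_numeral)
    then have "\<bar>\<Sum>j<2^m. hdm m r j * z j\<bar>^2 \<le> (6*\<alpha>)^2"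
      by (intro power_mono) auto
    then show ?thesis by (simp add: power_mult_distrib)
  qed
  have "(2::real)^m * (\<Sum>j<2^m. (z j)^2) \<le> (\<Sum>r<(2::nat)^m. 36 * \<alpha>^2)"
    unfolding hd_energy[symmetric] by (intro sum_mono sq) simp
  also have "\<dots> = 2^m * (36 * \<alpha>^2)" by simp
  finally have "(\<Sum>j<2^m. (z j)^2) \<le> 36 * \<alpha>^2" by simp
  moreover have "(\<Sum>j<2^m. (z j)^2) = real (ham m x y)"
  proof -
    have "(\<Sum>j<2^m. (z j)^2) = (\<Sum>j<2^m. of_bool (x!j \<noteq> y!j))"
      by (intro sum.cong refl) (auto simp: z_def bv_def)
    also have "\<dots> = real (card ({..<2^m} \<inter> {j. x!j \<noteq> y!j}))" by simp
    also have "{..<2^m} \<inter> {j. x!j \<noteq> y!j} = {j. j < 2^m \<and> x!j \<noteq> y!j}" by auto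
    finally show ?thesis by (simp add: ham_def)
  qed
  ultimately show ?thesis by simp
qed



lemma sum_measure_le:
  assumes "prob_space M" "finite I" "\<And>i. i \<in> I \<Longrightarrow> A i \<in> sets M"
    and "\<And>\<omega>. \<omega> \<in> space M \<Longrightarrow> real (card {i\<in>I. \<omega> \<in> A i}) \<le> C"
  shows "(\<Sum>i\<in>I. measure M (A i)) \<le> C"
proof -
  interpret prob_space M by fact
  have int: "integrable M (indicator (A i) :: _ \<Rightarrow> real)" if "i \<in> I" for i
    using assms(3)[OF that] by (simp add: integrable_indicator_iff sets.Int_space_eq2 less_top[symmetric])
  have "(\<Sum>i\<in>I. measure M (A i)) = (\<Sum>i\<in>I. \<integral>\<omega>. indicator (A i) \<omega> \<partial>M)"
    using assms(3) by (intro sum.cong refl) (simp add: sets.Int_space_eq2)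
  also have "\<dots> = (\<integral>\<omega>. (\<Sum>i\<in>I. indicator (A i) \<omega>) \<partial>M)"
    using Bochner_Integration.integral_sum[where I=I and M=M and f="\<lambda>i. indicator (A i)"] int by simp
  also have "\<dots> \<le> C"
  proof (rule integral_le_const)
    show "integrable M (\<lambda>\<omega>. \<Sum>i\<in>I. indicator (A i) \<omega> :: real)"
      using int by auto
    show "AE \<omega> in M. (\<Sum>i\<in>I. indicator (A i) \<omega>) \<le> C"
    proof (rule AE_I2)
      fix \<omega> assume "\<omega> \<in> space M"
      have "(\<Sum>i\<in>I. indicator (A i) \<omega> :: real) = (\<Sum>i\<in>I. of_bool (\<omega> \<in> A i))"
        by (simp add: indicator_def)
      also have "\<dots> = real (card (I \<inter> {i. \<omega> \<in> A i}))" using assms(2) by simp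
      also have "I \<inter> {i. \<omega> \<in> A i} = {i\<in>I. \<omega> \<in> A i}" by auto
      finally show "(\<Sum>i\<in>I. indicator (A i) \<omega>) \<le> C" using assms(4)[OF \<open>\<omega> \<in> space M\<close>] by simp
    qed
  qed
  finally show ?thesis .
qed

fun decl :: "(bool list \<Rightarrow> 'a set) \<Rightarrow> nat \<Rightarrow> bool list list \<Rightarrow> 'a \<Rightarrow> bool list" where
  "decl C d [] a = replicate d False"
| "decl C d (y#ys) a = (if a \<in> C y then y else decl C d ys a)"

lemma decl_in: "set ys \<subseteq> {x. length x = d} \<Longrightarrow> length (decl C d ys a) = d"
  by (induction ys) auto

lemma decl_cons: "\<exists>y\<in>set ys. a \<in> C y \<Longrightarrow> a \<in> C (decl C d ys a)"
  by (induction ys) auto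

lemma decl_meas: "(\<And>y. y \<in> set ys \<Longrightarrow> C y \<inter> space M \<in> sets M) \<Longrightarrow> decl C d ys \<in> measurable M (count_space UNIV)"
proof (induction ys)
  case Nil then show ?case by simp
next
  case (Cons y ys)
  have "(\<lambda>a. if a \<in> C y then y else decl C d ys a) \<in> measurable M (count_space UNIV)"
    by (rule measurable_If_set) (use Cons in auto)
  then show ?case by (simp add: fun_eq_iff[symmetric])
qed



lemma flip_flip: "i < length z \<Longrightarrow> (z[i := \<not> z!i])[i := \<not> (z[i := \<not> z!i])!i] = z"
  by simp

lemma privacy_core:
  fixes \<Omega> :: "'a measure" and P :: "bool list \<Rightarrow> 'a measure" and Cons :: "bool list \<Rightarrow> 'a set"
    and d :: nat and K :: real
  assumes K0: "0 \<le> K"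
    and ps: "\<And>x. length x = d \<Longrightarrow> prob_space (P x)"
    and sP: "\<And>x. length x = d \<Longrightarrow> sets (P x) = sets \<Omega>"
    and cm: "\<And>y. length y = d \<Longrightarrow> Cons y \<in> sets \<Omega>"
    and acc: "\<And>x. length x = d \<Longrightarrow> 2/3 \<le> measure (P x) (Cons x)"
    and dp: "\<And>x i S. length x = d \<Longrightarrow> i < d \<Longrightarrow> S \<in> sets \<Omega> \<Longrightarrow>
              measure (P x) S \<le> 3 * measure (P (x[i := \<not> x!i])) S + 1/3"
    and ch: "\<And>x y a. length x = d \<Longrightarrow> length y = d \<Longrightarrow> a \<in> Cons x \<Longrightarrow> a \<in> Cons y \<Longrightarrow>
              real (card {j. j < d \<and> x!j \<noteq> y!j}) \<le> K"
  shows "real d \<le> 12*K + 9"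
proof -
  define B where "B = {x::bool list. length x = d}"
  have finB: "finite B" unfolding B_def using finite_lists_length_eq[of "UNIV::bool set" d] by simp
  have repB: "replicate d False \<in> B" by (simp add: B_def)
  then have cardB: "card B > 0" using finB by (auto simp: card_gt_0_iff)
  obtain ys where ys: "set ys = B" using finite_list[OF finB] by blast
  define dec where "dec = decl Cons d ys"
  have dec_len: "length (dec a) = d" for a unfolding dec_def by (rule decl_in) (simp add: ys B_def)
  have dec_cons: "a \<in> Cons (dec a)" if "a \<in> Cons y" "length y = d" for a y
    unfolding dec_def by (rule decl_cons) (use that ys B_def in auto)
  have dec_meas: "dec \<in> measurable \<Omega> (count_space UNIV)"
    unfolding dec_def by (rule decl_meas) (use cm ys B_def in auto)
  define fl where "fl x i = x[i := \<not> x!i]" for x :: "bool list" and i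
  define S where "S x i = Cons x \<inter> {a. dec a ! i = x!i}" for x i
  define bad where "bad x i = Cons x \<inter> {a. dec a ! i \<noteq> x!i}" for x i
  have sub: "Cons x \<subseteq> space \<Omega>" if "length x = d" for x
    using cm[OF that] by (rule sets.sets_into_space)
  have pre: "{a \<in> space \<Omega>. Q (dec a)} \<in> sets \<Omega>" for Q
  proof -
    have "dec -` {w. Q w} \<inter> space \<Omega> \<in> sets \<Omega>" by (rule measurable_sets[OF dec_meas]) simp
    moreover have "dec -` {w. Q w} \<inter> space \<Omega> = {a \<in> space \<Omega>. Q (dec a)}" by auto
    ultimately show ?thesis by simp
  qed
  have S_m: "S x i \<in> sets \<Omega>" if "length x = d" for x i
  proof -
    have "S x i = Cons x \<inter> {a \<in> space \<Omega>. dec a ! i = x!i}" using sub[OF that] by (auto simp: S_def)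
    then show ?thesis using cm[OF that] pre by auto
  qed
  have bad_m: "bad x i \<in> sets \<Omega>" if "length x = d" for x i
  proof -
    have "bad x i = Cons x \<inter> {a \<in> space \<Omega>. dec a ! i \<noteq> x!i}" using sub[OF that] by (auto simp: bad_def)
    then show ?thesis using cm[OF that] pre by auto
  qed
  have split: "measure (P x) (Cons x) = measure (P x) (S x i) + measure (P x) (bad x i)"
    if "length x = d" for x i
  proof -
    interpret prob_space "P x" using ps[OF that] .
    have "Cons x = S x i \<union> bad x i" by (auto simp: S_def bad_def)
    moreover have "S x i \<inter> bad x i = {}" by (auto simp: S_def bad_def)
    ultimately show ?thesis using S_m[OF that] bad_m[OF that] sP[OF that]
      by (simp add: finite_measure_Union)
  qed
  have badsum: "(\<Sum>i<d. measure (P x) (bad x i)) \<le> K" if x: "length x = d" for x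
  proof (rule sum_measure_le)
    show "prob_space (P x)" using ps[OF x] .
    show "bad x i \<in> sets (P x)" for i using bad_m[OF x] sP[OF x] by simp
    fix \<omega>
    show "real (card {i \<in> {..<d}. \<omega> \<in> bad x i}) \<le> K"
    proof (cases "\<omega> \<in> Cons x")
      case True
      have "card {i \<in> {..<d}. \<omega> \<in> bad x i} \<le> card {j. j < d \<and> dec \<omega> ! j \<noteq> x!j}"
        by (rule card_mono) (auto simp: bad_def)
      moreover have "real (card {j. j < d \<and> dec \<omega> ! j \<noteq> x!j}) \<le> K"
        by (rule ch[OF dec_len x dec_cons[OF True x] True])
      ultimately show ?thesis by (meson of_nat_le_iff order_trans)
    next
      case False
      then have "{i \<in> {..<d}. \<omega> \<in> bad x i} = {}" by (auto simp: bad_def)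
      then show ?thesis using K0 by (simp only: card.empty of_nat_0)
    qed
  qed (simp)
  have Ssum: "(\<Sum>i<d. measure (P z) (S (fl z i) i)) \<le> K + 1" if z: "length z = d" for z
  proof (rule sum_measure_le)
    show "prob_space (P z)" using ps[OF z] .
    show "S (fl z i) i \<in> sets (P z)" for i using S_m[of "fl z i" i] sP[OF z] z by (simp add: fl_def)
    fix \<omega>
    show "real (card {i \<in> {..<d}. \<omega> \<in> S (fl z i) i}) \<le> K + 1"
    proof (cases "{i \<in> {..<d}. \<omega> \<in> S (fl z i) i} = {}")
      case True then show ?thesis using K0 by (simp only: card.empty of_nat_0)
    next
      case False
      then obtain i0 where i0: "i0 < d" "\<omega> \<in> S (fl z i0) i0" by auto
      have fz: "length (fl z i0) = d" using z by (simp add: fl_def)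
      have om: "\<omega> \<in> Cons (fl z i0)" using i0 by (simp add: S_def)
      have "card {i \<in> {..<d}. \<omega> \<in> S (fl z i) i} \<le> card {j. j < d \<and> dec \<omega> ! j \<noteq> z!j}"
        by (rule card_mono) (use z in \<open>auto simp: S_def fl_def\<close>)
      also have "\<dots> \<le> card ({j. j < d \<and> dec \<omega> ! j \<noteq> fl z i0 ! j} \<union> {i0})"
        by (rule card_mono) (use z in \<open>auto simp: fl_def nth_list_update\<close>)
      also have "\<dots> \<le> card {j. j < d \<and> dec \<omega> ! j \<noteq> fl z i0 ! j} + 1"
        using card_Un_le[of _ "{i0}"] by simp
      finally have "real (card {i \<in> {..<d}. \<omega> \<in> S (fl z i) i}) \<le> real (card {j. j < d \<and> dec \<omega> ! j \<noteq> fl z i0 ! j}) + 1"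
        by simp
      moreover have "real (card {j. j < d \<and> dec \<omega> ! j \<noteq> fl z i0 ! j}) \<le> K"
        by (rule ch[OF dec_len fz dec_cons[OF om fz] om])
      ultimately show ?thesis by simp
    qed
  qed (simp)
  define g where "g x i = measure (P x) (bad x i)" for x i
  have per: "1/3 - g (fl z i) i \<le> 3 * measure (P z) (S (fl z i) i)" if z: "length z = d" and i: "i < d" for z i
  proof -
    have fz: "length (fl z i) = d" using z by (simp add: fl_def)
    have "2/3 \<le> measure (P (fl z i)) (S (fl z i) i) + g (fl z i) i"
      using acc[OF fz] split[OF fz, of i] by (simp add: g_def)
    moreover have "measure (P (fl z i)) (S (fl z i) i) \<le> 3 * measure (P z) (S (fl z i) i) + 1/3"
      using dp[OF fz i S_m[OF fz]] flip_flip[of i z] z i by (simp add: fl_def)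
    ultimately show ?thesis by simp
  qed
  have perz: "real d / 3 - (\<Sum>i<d. g (fl z i) i) \<le> 3 * K + 3" if z: "length z = d" for z
  proof -
    have "(\<Sum>i<d. 1/3 - g (fl z i) i) \<le> (\<Sum>i<d. 3 * measure (P z) (S (fl z i) i))"
      by (intro sum_mono per[OF z]) simp
    also have "\<dots> \<le> 3 * (K + 1)" using Ssum[OF z] by (simp add: sum_distrib_left[symmetric])
    finally show ?thesis by (simp add: sum_subtractf)
  qed
  have "(\<Sum>z\<in>B. real d / 3 - (\<Sum>i<d. g (fl z i) i)) \<le> (\<Sum>z\<in>B. 3 * K + 3)"
    by (intro sum_mono perz) (simp add: B_def)
  then have A1: "real (card B) * (real d / 3) - (\<Sum>z\<in>B. \<Sum>i<d. g (fl z i) i) \<le> real (card B) * (3*K+3)"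
    by (simp add: sum_subtractf)
  have reidx: "(\<Sum>z\<in>B. g (fl z i) i) = (\<Sum>x\<in>B. g x i)" if i: "i < d" for i
    by (rule sum.reindex_bij_witness[where i="\<lambda>x. fl x i" and j="\<lambda>x. fl x i"])
      (use i flip_flip in \<open>auto simp: B_def fl_def\<close>)
  have "(\<Sum>z\<in>B. \<Sum>i<d. g (fl z i) i) = (\<Sum>i<d. \<Sum>z\<in>B. g (fl z i) i)" by (rule sum.swap)
  also have "\<dots> = (\<Sum>i<d. \<Sum>x\<in>B. g x i)" by (intro sum.cong refl reidx) simp
  also have "\<dots> = (\<Sum>x\<in>B. \<Sum>i<d. g x i)" by (rule sum.swap)
  also have "\<dots> \<le> (\<Sum>x\<in>B. K)" by (intro sum_mono) (use badsum in \<open>auto simp: B_def g_def\<close>)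
  finally have A2: "(\<Sum>z\<in>B. \<Sum>i<d. g (fl z i) i) \<le> real (card B) * K" by simp
  from A1 A2 have "real (card B) * (real d / 3) \<le> real (card B) * (4*K+3)"
    by (simp add: algebra_simps)
  then have "real d / 3 \<le> 4*K+3" using cardB by simp
  then show ?thesis by simp
qed



definition rest :: "nat \<Rightarrow> nat \<Rightarrow> nat option list" where
  "rest m T = concat (map (stage m) [0..<2^m]) @ replicate (T - tt m (2^m-1)) None"

lemma strm_split: "strm m T x = datas m x @ rest m T"
proof -
  have "Suc (2^m - 1) = (2::nat)^m" by simp
  then show ?thesis by (simp add: strm_def pre_def rest_def)
qed

lemma len_datas: "length (datas m x) = 2^m" by (simp add: datas_def)

lemma valid_strm:
  assumes "2^m \<le> n" "tt m (2^m-1) \<le> T"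
  shows "valid_stream n T (strm m T x)"
proof -
  have d: "y \<in> set (datas m x) \<Longrightarrow> y = None \<or> (\<exists>i<2^m. y = Some i)" for y
    by (auto simp: datas_def)
  have s: "y \<in> set (stage m r) \<Longrightarrow> (\<exists>i<2^m. y = Some i)" for y r
    by (auto simp: stage_def)
  have "y \<in> set (strm m T x) \<Longrightarrow> y = None \<or> (\<exists>i<2^m. y = Some i)" for y
    unfolding strm_split rest_def using d s by (auto simp del: upt_Suc)
  then have "y \<in> set (strm m T x) \<Longrightarrow> (case y of None \<Rightarrow> True | Some i \<Rightarrow> i < n)" for y
    using assms(1) by fastforce
  then show ?thesis unfolding valid_stream_def using length_strm[OF assms(2)] by auto
qed

lemma neighbors_strm:
  assumes "i < 2^m" "length x = 2^m"
  shows "neighbors (strm m T x) (strm m T (x[i := \<not> x!i]))"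
proof -
  let ?u = "strm m T x" and ?v = "strm m T (x[i := \<not> x!i])"
  have len: "length ?u = length ?v" by (simp add: strm_split len_datas)
  have "{j. j < length ?u \<and> ?u ! j \<noteq> ?v ! j} \<subseteq> {i}"
  proof
    fix j assume j: "j \<in> {j. j < length ?u \<and> ?u ! j \<noteq> ?v ! j}"
    show "j \<in> {i}"
    proof (cases "j < 2^m")
      case True
      then show ?thesis using j assms unfolding strm_split
        by (auto simp: nth_append len_datas datas_def nth_list_update split: if_splits)
    next
      case False
      then show ?thesis using j unfolding strm_split by (auto simp: nth_append len_datas)
    qed
  qed
  then have "card {j. j < length ?u \<and> ?u ! j \<noteq> ?v ! j} \<le> card {i}" by (rule card_mono[rotated]) simp
  then show ?thesis unfolding neighbors_def using len by simp
qed

lemma tt_mono: "r \<le> r' \<Longrightarrow> tt m r \<le> tt m r'"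
proof -
  assume "r \<le> r'"
  then obtain w where "pre m [] r' = pre m [] r @ w" using pre_mono by blast
  then have "length (pre m [] r') = length (pre m [] r) + length w" by simp
  then show ?thesis by (simp add: length_pre)
qed

lemma comp_meas:
  assumes "t \<in> {1..T}" "k \<in> {1..n}"
  shows "(\<lambda>a. a t k) \<in> borel_measurable (out_space T n)"
proof -
  have "(\<lambda>a. a t) \<in> measurable (out_space T n) (PiM {1..n} (\<lambda>_. borel))"
    unfolding out_space_def using measurable_component_singleton[OF assms(1)] by simp
  moreover have "(\<lambda>b. b k) \<in> measurable (PiM {1..n} (\<lambda>_. borel)) borel"
    using measurable_component_singleton[OF assms(2)] by simp
  ultimately have "(\<lambda>b. b k) \<circ> (\<lambda>a. a t) \<in> borel_measurable (out_space T n)"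
    by (rule measurable_comp)
  then show ?thesis by (simp add: comp_def)
qed

lemma exists_pow2:
  fixes X :: real
  assumes "1 \<le> X"
  shows "\<exists>m. 2^m \<le> X \<and> X < 2^Suc m"
proof -
  obtain k where k: "X < 2^k" using real_arch_pow[of 2 X] by auto
  define m' where "m' = (LEAST k. X < (2::real)^k)"
  have m'1: "X < 2^m'" unfolding m'_def by (rule LeastI[of _ k]) (rule k)
  have m'0: "m' \<noteq> 0"
  proof
    assume "m' = 0" then show False using m'1 assms by simp
  qed
  have "\<not> X < 2^(m'-1)" unfolding m'_def by (rule not_less_Least) (use m'0 m'_def in auto)
  then show ?thesis using m'1 m'0 by (intro exI[of _ "m'-1"]) auto
qed



lemma main_bound:
  fixes n T :: nat and \<epsilon> \<delta> \<alpha> :: real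
  assumes n: "4000 \<le> n" and T: "4000 \<le> T" and e: "0 \<le> \<epsilon>" "\<epsilon> \<le> 1" and dl: "0 \<le> \<delta>" "\<delta> \<le> 1/3"
    and mech: "mechanism n T M" and dp: "event_dp \<epsilon> \<delta> n T M" and acc: "topk_accurate \<alpha> n T M"
  shows "1/60 * min (real T powr (1/4)) (sqrt (real n)) \<le> \<alpha>"
proof -
  define X where "X = min (real n) (sqrt (real T / 3))"
  have "(36::real)^2 \<le> real T / 3" using T by simp
  then have "36 \<le> sqrt (real T / 3)" by (rule real_le_rsqrt)
  then have X36: "36 \<le> X" using n by (simp add: X_def)
  obtain m where m: "2^m \<le> X" "X < 2^Suc m" using exists_pow2[of X] X36 by auto
  define d where "d = (2::nat)^m"
  have dX: "real d \<le> X" using m by (simp add: d_def)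
  have dn: "d \<le> n" using dX by (simp add: X_def)
  have "real d \<le> sqrt (real T / 3)" using dX by (simp add: X_def)
  then have "(real d)^2 \<le> (sqrt (real T / 3))^2" by (intro power_mono) simp_all
  then have "(real d)^2 \<le> real T / 3" by simp
  then have "real (3 * (d * d)) \<le> real T" by (simp add: power2_eq_square)
  then have dT: "3 * (d * d) \<le> T" by (simp only: of_nat_le_iff)
  have d1: "1 \<le> d" by (simp add: d_def)
  have ttT: "tt m (2^m-1) \<le> T"
  proof -
    have "tt m (2^m-1) \<le> 2^m + Suc (2^m-1) * (2 * 2^m)" by (rule tt_bound)
    also have "\<dots> = d + d * (2 * d)" by (simp add: d_def)
    also have "\<dots> \<le> 3 * (d * d)" using le_square[of d] by simp
    finally show ?thesis using dT by simp
  qed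
  have d18: "36 < 2 * real d" using m X36 by (simp add: d_def)
  define \<Omega> where "\<Omega> = out_space T n"
  define Cons where "Cons y = {a \<in> space \<Omega>. \<forall>r\<in>{..<2^m}. \<bar>a (tt m r) (kk m r) - ans m r y\<bar> \<le> \<alpha>}" for y
  have tt_in: "tt m r \<in> {1..T}" if "r < 2^m" for r
  proof -
    have "1 \<le> tt m r" using tt_ge[of m r] by (metis le_trans one_le_numeral one_le_power)
    moreover have "tt m r \<le> tt m (2^m-1)" using that by (intro tt_mono) simp
    ultimately show ?thesis using ttT by simp
  qed
  have kk_in: "kk m r \<in> {1..n}" for r using kk_pos[of m r] kk_le[of m r] dn by (simp add: d_def)
  have consm: "Cons y \<in> sets \<Omega>" for y
    unfolding Cons_def
  proof (rule sets.sets_Collect_finite_All)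
    fix r :: nat assume r: "r \<in> {..<2^m}"
    have f: "(\<lambda>a. \<bar>a (tt m r) (kk m r) - ans m r y\<bar>) \<in> borel_measurable \<Omega>"
      using comp_meas[OF tt_in kk_in] r unfolding \<Omega>_def by auto
    have "(\<lambda>a. \<bar>a (tt m r) (kk m r) - ans m r y\<bar>) -` {..\<alpha>} \<inter> space \<Omega> \<in> sets \<Omega>"
      by (rule measurable_sets[OF f]) simp
    moreover have "(\<lambda>a. \<bar>a (tt m r) (kk m r) - ans m r y\<bar>) -` {..\<alpha>} \<inter> space \<Omega>
       = {a \<in> space \<Omega>. \<bar>a (tt m r) (kk m r) - ans m r y\<bar> \<le> \<alpha>}" by auto
    ultimately show "{a \<in> space \<Omega>. \<bar>a (tt m r) (kk m r) - ans m r y\<bar> \<le> \<alpha>} \<in> sets \<Omega>" by simp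
  qed simp
  have valid: "valid_stream n T (strm m T x)" for x
    using valid_strm[of m n T x] dn ttT by (simp add: d_def)
  have ps: "prob_space (M (strm m T x))" and sP: "sets (M (strm m T x)) = sets \<Omega>" for x
    using mech valid[of x] by (auto simp: mechanism_def \<Omega>_def)
  have spP: "space (M (strm m T x)) = space \<Omega>" for x using sP[of x] by (rule sets_eq_imp_space_eq)
  have accx: "2/3 \<le> measure (M (strm m T x)) (Cons x)" if x: "length x = 2^m" for x
  proof -
    let ?u = "strm m T x"
    let ?A = "{a \<in> space (M ?u). \<forall>t\<in>{1..T}. \<forall>k\<in>{1..n}. \<bar>a t k - topk n (freq ?u t) k\<bar> \<le> \<alpha>}"
    have "2/3 \<le> measure (M ?u) ?A" using acc valid[of x] by (simp add: topk_accurate_def)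
    also have "\<dots> \<le> measure (M ?u) (Cons x)"
    proof -
      interpret prob_space "M ?u" by (rule ps)
      show ?thesis
      proof (rule finite_measure_mono)
        show "Cons x \<in> events" using consm[of x] sP[of x] by simp
        show "?A \<subseteq> Cons x"
        proof
          fix a assume a: "a \<in> ?A"
          have "\<bar>a (tt m r) (kk m r) - ans m r x\<bar> \<le> \<alpha>" if r: "r < 2^m" for r
          proof -
            have "\<bar>a (tt m r) (kk m r) - topk n (freq ?u (tt m r)) (kk m r)\<bar> \<le> \<alpha>"
              using a tt_in[OF r] kk_in[of r] by blast
            then show ?thesis using topk_strm[OF r, of n T x] dn by (simp add: d_def)
          qed
          then show "a \<in> Cons x" using a spP[of x] by (auto simp: Cons_def)
        qed
      qed
    qed
    finally show ?thesis .
  qed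
  have alpha0: "0 \<le> \<alpha>"
  proof -
    have "Cons (replicate (2^m) False) \<noteq> {}" using accx[of "replicate (2^m) False"] by auto
    then obtain a where "a \<in> Cons (replicate (2^m) False)" by blast
    then have "\<bar>a (tt m 0) (kk m 0) - ans m 0 (replicate (2^m) False)\<bar> \<le> \<alpha>" by (simp add: Cons_def)
    then show ?thesis by simp
  qed
  have core: "real (2^m) \<le> 12 * (36 * \<alpha>^2) + 9"
  proof (rule privacy_core[where \<Omega>=\<Omega> and P="\<lambda>x. M (strm m T x)" and Cons=Cons])
    show "0 \<le> 36 * \<alpha>^2" by simp
    show "prob_space (M (strm m T x))" for x by (rule ps)
    show "sets (M (strm m T x)) = sets \<Omega>" for x by (rule sP)
    show "Cons y \<in> sets \<Omega>" for y by (rule consm)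
    show "2/3 \<le> measure (M (strm m T x)) (Cons x)" if "length x = 2^m" for x using accx[OF that] .
    show "measure (M (strm m T x)) S \<le> 3 * measure (M (strm m T (x[i := \<not> x!i]))) S + 1/3"
      if x: "length x = 2^m" and i: "i < 2^m" and S: "S \<in> sets \<Omega>" for x i S
    proof -
      have "measure (M (strm m T x)) S \<le> exp \<epsilon> * measure (M (strm m T (x[i := \<not> x!i]))) S + \<delta>"
        using dp valid[of x] valid[of "x[i := \<not> x!i]"] neighbors_strm[OF i x, of T] S
        unfolding event_dp_def \<Omega>_def by blast
      moreover have "exp \<epsilon> \<le> 3" using e exp_le by (meson exp_le_cancel_iff order_trans)
      moreover have "0 \<le> measure (M (strm m T (x[i := \<not> x!i]))) S" by simp
      ultimately have "exp \<epsilon> * measure (M (strm m T (x[i := \<not> x!i]))) S \<le> 3 * measure (M (strm m T (x[i := \<not> x!i]))) S"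
        by (intro mult_right_mono)
      with \<open>measure (M (strm m T x)) S \<le> exp \<epsilon> * measure (M (strm m T (x[i := \<not> x!i]))) S + \<delta>\<close> dl
      show ?thesis by linarith
    qed
    show "real (card {j. j < 2^m \<and> x!j \<noteq> y!j}) \<le> 36 * \<alpha>^2"
      if "length x = 2^m" "length y = 2^m" "a \<in> Cons x" "a \<in> Cons y" for x y a
      using cons_ham[of m a x \<alpha> y] that unfolding Cons_def ham_def by auto
  qed
  define Y where "Y = min (real T powr (1/4)) (sqrt (real n))"
  have Y0: "0 \<le> Y" by (simp add: Y_def)
  have Yn: "Y^2 \<le> real n"
  proof -
    have "Y^2 \<le> (sqrt (real n))^2" using Y0 by (intro power_mono) (auto simp: Y_def)
    then show ?thesis by simp
  qed
  have YT: "Y^2 \<le> sqrt (real T)"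
  proof -
    have "Y^2 \<le> (real T powr (1/4))^2" using Y0 by (intro power_mono) (auto simp: Y_def)
    also have "(real T powr (1/4))^2 = real T powr (1/2)"
      by (simp add: power2_eq_square powr_add[symmetric])
    also have "\<dots> = sqrt (real T)" by (simp add: powr_half_sqrt)
    finally show ?thesis .
  qed
  have s3: "sqrt (real T) / 2 \<le> sqrt (real T / 3)"
  proof -
    have "sqrt (real T / 3) = sqrt (real T) / sqrt 3" by (simp add: real_sqrt_divide)
    moreover have "sqrt 3 \<le> (2::real)" by (rule real_le_lsqrt) simp_all
    moreover have "0 < sqrt (3::real)" by simp
    moreover have "sqrt (real T) / 2 \<le> sqrt (real T) / sqrt 3"
      by (rule divide_left_mono) (use \<open>sqrt 3 \<le> 2\<close> \<open>0 < sqrt 3\<close> in auto)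
    ultimately show ?thesis by simp
  qed
  have XY: "Y^2 / 2 \<le> X" using Yn YT s3 by (simp add: X_def)
  have "Y^2 / 4 < real d" using XY m by (simp add: d_def)
  moreover have "real d \<le> 432 * \<alpha>^2 + 9" using core by (simp add: d_def)
  ultimately have "(Y/60)^2 \<le> \<alpha>^2" using d18 by (simp add: power_divide)
  then have "Y/60 \<le> \<alpha>" using alpha0 by (rule power2_le_imp_le)
  then show ?thesis by (simp add: Y_def)
qed


theorem mainTheorem15:
  shows "\<exists>c>0. \<exists>N::nat. \<forall>(n::nat) (T::nat) (\<epsilon>::real) (\<delta>::real) (\<alpha>::real) M.
     N \<le> n \<longrightarrow> N \<le> T \<longrightarrow> 0 \<le> \<epsilon> \<longrightarrow> \<epsilon> \<le> 1 \<longrightarrow> 0 \<le> \<delta> \<longrightarrow> \<delta> \<le> 1/3 \<longrightarrow>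
     mechanism n T M \<longrightarrow> continual n T M \<longrightarrow> event_dp \<epsilon> \<delta> n T M \<longrightarrow>
     topk_accurate \<alpha> n T M \<longrightarrow>
     \<alpha> \<ge> c * min (real T powr (1/4)) (sqrt (real n))"
proof (intro exI[of _ "1/60::real"] conjI exI[of _ "4000::nat"] allI impI)
  show "(0::real) < 1/60" by simp
next
  fix n T :: nat and \<epsilon> \<delta> \<alpha> :: real and M
  assume "4000 \<le> n" "4000 \<le> T" "0 \<le> \<epsilon>" "\<epsilon> \<le> 1" "0 \<le> \<delta>" "\<delta> \<le> 1/3"
    "mechanism n T M" "continual n T M" "event_dp \<epsilon> \<delta> n T M" "topk_accurate \<alpha> n T M"
  then show "1/60 * min (real T powr (1/4)) (sqrt (real n)) \<le> \<alpha>"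
    using main_bound by blast
qed

end
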